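(* Let $G$ be a finite group with $|G|\ge3$ satisfying Property P. Then for every $S\in\mathcal B(G)$ with $\max\Delta(\mathsf L(S))\ge2$ there exists $T\in\mathcal B(G)$ with $|T|<|S|$ and $\max\Delta(\mathsf L(T))\ge\max\Delta(\mathsf L(S))-1$.
   Context: For a finite group $G$ (multiplicative, identity $1_G$), $\mathcal F(G)$ is the free abelian monoid with basis $G$ (sequences $S=g_1\boldsymbol{\cdot}\ldots\boldsymbol{\cdot}g_\ell$, operation $\boldsymbol{\cdot}$, length $|S|=\ell$). $\pi(S)=\{g_{\tau(1)}\cdots g_{\tau(\ell)}:\tau\text{ a permutation of }[1,\ell]\}$, $\mathcal B(G)=\{S\in\mathcal F(G):1_G\in\pi(S)\}$, $\mathcal A(G)$ its set of atoms. For $A\in\mathcal B(G)$, $\mathsf L(A)=\{k\in\mathbb N: A=U_1\boldsymbol{\cdot}\ldots\boldsymbol{\cdot}U_k \text{ with } U_i\in\mathcal A(G)\}$ (and $\mathsf L(1_{\mathcal F(G)})=\{0\}$). For a finite set $L=\{m_1<\dots<m_k\}\subset\mathbb Z$, $\Delta(L)=\{m_i-m_{i-1}:i\in[2,k]\}$. $G$ satisfies Property P if: whenever $U=g_1\boldsymbol{\cdot}\ldots\boldsymbol{\cdot}g_\ell\in\mathcal A(G)$ and $g_1=h_1h_2$ with $h_1,h_2\in G$, the sequence $h_1\boldsymbol{\cdot}h_2\boldsymbol{\cdot}g_2\boldsymbol{\cdot}\ldots\boldsymbol{\cdot}g_\ell$ is either an atom or a product of two atoms of $\mathcal B(G)$.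 *)

theory Defs
  imports "HOL-Algebra.Group" "HOL-Library.Multiset"
begin

definition list_prod :: "('a, 'b) monoid_scheme \<Rightarrow> 'a list \<Rightarrow> 'a" where
  "list_prod G xs = foldr (\<lambda>x y. x \<otimes>\<^bsub>G\<^esub> y) xs \<one>\<^bsub>G\<^esub>"

definition seq_prods :: "('a, 'b) monoid_scheme \<Rightarrow> 'a multiset \<Rightarrow> 'a set" where
  "seq_prods G S = {list_prod G xs | xs. mset xs = S}"

definition seqs :: "('a, 'b) monoid_scheme \<Rightarrow> 'a multiset set" where
  "seqs G = {S. set_mset S \<subseteq> carrier G}"

definition prod_one_seqs :: "('a, 'b) monoid_scheme \<Rightarrow> 'a multiset set" where
  "prod_one_seqs G = {S \<in> seqs G. \<one>\<^bsub>G\<^esub> \<in> seq_prods G S}"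

text \<open>Atoms of the monoid B(G) (whose only unit is the empty sequence).\<close>
definition is_atom :: "('a, 'b) monoid_scheme \<Rightarrow> 'a multiset \<Rightarrow> bool" where
  "is_atom G U \<longleftrightarrow> U \<in> prod_one_seqs G \<and> U \<noteq> {#} \<and>
     (\<forall>A B. A \<in> prod_one_seqs G \<longrightarrow> B \<in> prod_one_seqs G \<longrightarrow> U = A + B
        \<longrightarrow> A = {#} \<or> B = {#})"

definition lengths :: "('a, 'b) monoid_scheme \<Rightarrow> 'a multiset \<Rightarrow> nat set" where
  "lengths G A = {k. \<exists>Us. length Us = k \<and> (\<forall>U \<in> set Us. is_atom G U) \<and> sum_list Us = A}"

definition Delta :: "nat set \<Rightarrow> nat set" where
  "Delta L = {b - a | a b. a \<in> L \<and> b \<in> L \<and> a < b \<and> (\<forall>c \<in> L. \<not> (a < c \<and> c < b))}"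

definition property_P :: "('a, 'b) monoid_scheme \<Rightarrow> bool" where
  "property_P G \<longleftrightarrow> (\<forall>U g h1 h2. is_atom G U \<longrightarrow> g \<in># U \<longrightarrow>
      h1 \<in> carrier G \<longrightarrow> h2 \<in> carrier G \<longrightarrow> g = h1 \<otimes>\<^bsub>G\<^esub> h2 \<longrightarrow>
      (let V = U - {#g#} + {#h1, h2#} in
         is_atom G V \<or> (\<exists>U1 U2. is_atom G U1 \<and> is_atom G U2 \<and> V = U1 + U2)))"

end

theory Submission
  imports Defs
begin

definition excl :: "'c multiset multiset \<Rightarrow> 'c multiset \<Rightarrow> 'c \<Rightarrow> bool" where
  "excl M U x \<longleftrightarrow> x \<in># U \<and> (\<forall>U'\<in>#M - {#U#}. x \<notin># U')"

definition Pp :: "'c multiset multiset \<Rightarrow> 'c \<Rightarrow> 'c \<Rightarrow> bool" where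
  "Pp M x y \<longleftrightarrow> (\<exists>U1 U2 R. M = {#U1, U2#} + R \<and> x \<in># U1 \<and> y \<in># U2)"

lemma neq_in_remove: "U' \<in># M \<Longrightarrow> U' \<noteq> U \<Longrightarrow> U' \<in># M - {#U#}"
  by (simp add: in_diff_count)

lemma split2: "U \<in># M \<Longrightarrow> U' \<in># M - {#U#} \<Longrightarrow> M = {#U, U'#} + (M - {#U#} - {#U'#})"
  by (metis add_mset_add_single insert_DiffM union_commute union_mset_add_mset_left)

lemma pair_excl:
  assumes np: "\<not> Pp M x y" and U: "U \<in># M" "x \<in># U" and y: "y \<in># \<Sum>\<^sub># M"
  shows "excl M U x \<and> excl M U y"
proof -
  from y obtain Ub where Ub: "Ub \<in># M" "y \<in># Ub" by auto
  have yU: "y \<in># U"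
  proof (rule ccontr)
    assume "y \<notin># U"
    then have "Ub \<noteq> U" using Ub by auto
    then have "Ub \<in># M - {#U#}" using Ub neq_in_remove by metis
    then have "Pp M x y" unfolding Pp_def using split2[OF U(1)] U Ub by blast
    then show False using np by simp
  qed
  have 1: "y \<notin># U'" if "U' \<in># M - {#U#}" for U'
  proof
    assume "y \<in># U'"
    then have "Pp M x y" unfolding Pp_def using split2[OF U(1) that] U by blast
    then show False using np by simp
  qed
  have 2: "x \<notin># U'" if "U' \<in># M - {#U#}" for U'
  proof
    assume "x \<in># U'"
    have "M = {#U', U#} + (M - {#U#} - {#U'#})" using split2[OF U(1) that]
      by (simp add: add_mset_commute)
    then have "Pp M x y" unfolding Pp_def using \<open>x \<in># U'\<close> yU by blast
    then show False using np by simp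
  qed
  show ?thesis unfolding excl_def using 1 2 yU U by auto
qed

lemma excl_unique: "excl M U x \<Longrightarrow> U' \<in># M \<Longrightarrow> x \<in># U' \<Longrightarrow> U' = U"
  unfolding excl_def using neq_in_remove by metis

lemma chain:
  "2 \<le> length xs \<Longrightarrow> (\<forall>as x y bs. xs = as @ x # y # bs \<longrightarrow> \<not> Pp M x y) \<Longrightarrow>
   set xs \<subseteq> set_mset (\<Sum>\<^sub># M) \<Longrightarrow> \<exists>U\<in>#M. \<forall>x\<in>set xs. excl M U x"
proof (induction xs)
  case Nil thus ?case by simp
next
  case (Cons x xs)
  then obtain y ys where xs: "xs = y # ys" by (cases xs) auto
  have np: "\<not> Pp M x y" using Cons.prems(2) xs by (metis append_Nil)
  obtain U where U: "U \<in># M" "x \<in># U" using Cons.prems(3) by auto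
  have e: "excl M U x" "excl M U y" using pair_excl[OF np U] Cons.prems(3) xs by auto
  show ?case
  proof (cases "ys = []")
    case True then show ?thesis using e U xs by auto
  next
    case False
    have "\<exists>U\<in>#M. \<forall>x\<in>set xs. excl M U x"
    proof (rule Cons.IH)
      show "2 \<le> length xs" using False xs by (cases ys) auto
      show "\<forall>as x y bs. xs = as @ x # y # bs \<longrightarrow> \<not> Pp M x y"
        using Cons.prems(2) by (metis append_Cons)
      show "set xs \<subseteq> set_mset (\<Sum>\<^sub># M)" using Cons.prems(3) by auto
    qed
    then obtain U' where U': "U' \<in># M" "\<forall>x\<in>set xs. excl M U' x" by blast
    have "excl M U' y" using U' xs by auto
    then have "U = U'" using excl_unique[of M U' y U] U e(2) unfolding excl_def by blast
    then show ?thesis using U' e U by auto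
  qed
qed

lemma in_sum_list: "x \<in># sum_list Xs \<longleftrightarrow> (\<exists>X\<in>set Xs. x \<in># X)"
  by (induct Xs) auto

lemma comb:
  assumes sums: "sum_list Vs = sum_list Us" and Une: "\<forall>U\<in>set Us. U \<noteq> {#}"
    and lt: "length Vs < length Us"
    and ex: "\<forall>V\<in>set Vs. \<exists>U\<in># mset Us. \<forall>x\<in>#V. excl (mset Us) U x"
    and Vne: "\<forall>V\<in>set Vs. V \<noteq> {#}"
  shows False
proof -
  define M where "M = mset Us"
  define f where "f V = (SOME U. U \<in># M \<and> (\<forall>x\<in>#V. excl M U x))" for V
  have fV: "f V \<in># M \<and> (\<forall>x\<in>#V. excl M (f V) x)" if "V \<in> set Vs" for V
  proof -
    have "\<exists>U. U \<in># M \<and> (\<forall>x\<in>#V. excl M U x)" using ex that M_def by blast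
    then show ?thesis unfolding f_def by (rule someI_ex)
  qed
  have key: "U \<in> f ` set Vs \<and> count M U = 1" if U: "U \<in> set Us" for U
  proof -
    obtain x where x: "x \<in># U" using Une U by blast
    then have "x \<in># sum_list Vs" using sums U in_sum_list by metis
    then obtain V where V: "V \<in> set Vs" "x \<in># V" using in_sum_list by metis
    have ex: "excl M (f V) x" using fV V by blast
    have UM: "U \<in># M" using U M_def by simp
    have eq: "U = f V" using excl_unique[OF ex UM x] .
    have "count M U \<le> 1"
    proof (rule ccontr)
      assume "\<not> count M U \<le> 1"
      then have "U \<in># M - {#U#}" by (simp add: in_diff_count)
      then show False using ex eq x unfolding excl_def by auto
    qed
    moreover have "0 < count M U" using UM by simp
    ultimately have "count M U = 1" by linarith
    then show ?thesis using eq V by auto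
  qed
  have "distinct Us" unfolding distinct_count_atmost_1 using key M_def
    by (metis count_mset_0_iff set_mset_mset)
  then have "length Us = card (set Us)" by (simp add: distinct_card)
  also have "\<dots> \<le> card (f ` set Vs)" using key by (intro card_mono) auto
  also have "\<dots> \<le> card (set Vs)" by (rule card_image_le) simp
  also have "\<dots> \<le> length Vs" by (rule card_length)
  finally show False using lt by simp
qed

lemma Delta_finite: assumes "finite L" shows "finite (Delta L)"
proof -
  have "Delta L \<subseteq> (\<lambda>(a,b). b - a) ` (L \<times> L)" unfolding Delta_def by force
  then show ?thesis using finite_subset assms by blast
qed

lemma gap:
  assumes fin: "finite L" and x1: "x1 \<in> L" "x1 \<le> p" and x2: "x2 \<in> L" "q \<le> x2" and pq: "p < q"
    and sep: "\<forall>x\<in>L. x \<le> p \<or> q \<le> x"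
  shows "Delta L \<noteq> {} \<and> q - p \<le> Max (Delta L)"
proof -
  define A where "A = {x\<in>L. x \<le> p}"
  define B where "B = {x\<in>L. q \<le> x}"
  have fA: "finite A" "A \<noteq> {}" using fin x1 A_def by auto
  have fB: "finite B" "B \<noteq> {}" using fin x2 B_def by auto
  define a where "a = Max A"
  define b where "b = Min B"
  have a: "a \<in> L" "a \<le> p" using Max_in[OF fA] a_def A_def by auto
  have b: "b \<in> L" "q \<le> b" using Min_in[OF fB] b_def B_def by auto
  have nb: "\<not> (a < c \<and> c < b)" if "c \<in> L" for c
  proof
    assume c: "a < c \<and> c < b"
    from sep that consider "c \<le> p" | "q \<le> c" by blast
    then show False
    proof cases
      case 1 then have "c \<le> a" using Max_ge[OF fA(1)] that a_def A_def by auto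
      then show False using c by simp
    next
      case 2 then have "b \<le> c" using Min_le[OF fB(1)] that b_def B_def by auto
      then show False using c by simp
    qed
  qed
  have ab: "a < b" using a b pq by simp
  have D: "b - a \<in> Delta L" unfolding Delta_def using a b nb ab by blast
  moreover have "finite (Delta L)" by (rule Delta_finite[OF fin])
  ultimately have "b - a \<le> Max (Delta L)" by simp
  moreover have "q - p \<le> b - a" using a b by simp
  ultimately show ?thesis using D by auto
qed

context group begin

lemma atom_ne: "is_atom G U \<Longrightarrow> U \<noteq> {#}" by (simp add: is_atom_def)
lemma atom_po: "is_atom G U \<Longrightarrow> U \<in> prod_one_seqs G" by (simp add: is_atom_def)

lemma lp_Nil[simp]: "list_prod G [] = \<one>" by (simp add: list_prod_def)
lemma lp_Cons[simp]: "list_prod G (x#xs) = x \<otimes> list_prod G xs" by (simp add: list_prod_def)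
lemma lp_closed[simp]: "set xs \<subseteq> carrier G \<Longrightarrow> list_prod G xs \<in> carrier G"
  by (induct xs) auto
lemma lp_append: "set xs \<subseteq> carrier G \<Longrightarrow> set ys \<subseteq> carrier G \<Longrightarrow>
    list_prod G (xs@ys) = list_prod G xs \<otimes> list_prod G ys"
  by (induct xs) (auto simp: m_assoc)

lemma po_iff: "S \<in> prod_one_seqs G \<longleftrightarrow>
   (\<exists>xs. mset xs = S \<and> set xs \<subseteq> carrier G \<and> list_prod G xs = \<one>)"
  unfolding prod_one_seqs_def seqs_def seq_prods_def by force

lemma po_empty: "{#} \<in> prod_one_seqs G"
  unfolding po_iff by (intro exI[of _ "[]"]) auto

lemma po_add: assumes "A \<in> prod_one_seqs G" "B \<in> prod_one_seqs G"
  shows "A + B \<in> prod_one_seqs G"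
proof -
  obtain xs ys where "mset xs = A" "set xs \<subseteq> carrier G" "list_prod G xs = \<one>"
    "mset ys = B" "set ys \<subseteq> carrier G" "list_prod G ys = \<one>" using assms unfolding po_iff by blast
  then show ?thesis unfolding po_iff by (intro exI[of _ "xs @ ys"]) (auto simp: lp_append)
qed

lemma sum_atoms: "\<forall>U\<in>set Us. is_atom G U \<Longrightarrow> sum_list Us \<in> prod_one_seqs G"
  by (induct Us) (auto simp: is_atom_def intro: po_add po_empty)

lemma fact_exists: "S \<in> prod_one_seqs G \<Longrightarrow> \<exists>Us. (\<forall>U\<in>set Us. is_atom G U) \<and> sum_list Us = S"
proof (induction "size S" arbitrary: S rule: less_induct)
  case less
  show ?case
  proof (cases "S = {#}")
    case True then show ?thesis by (intro exI[of _ "[]"]) auto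
  next
    case ne: False
    show ?thesis
    proof (cases "is_atom G S")
      case True then show ?thesis by (intro exI[of _ "[S]"]) auto
    next
      case False
      then obtain A B where AB: "A \<in> prod_one_seqs G" "B \<in> prod_one_seqs G" "S = A + B"
          "A \<noteq> {#}" "B \<noteq> {#}"
        using less.prems ne unfolding is_atom_def by blast
      have "size A < size S" "size B < size S" using AB by (auto simp: nonempty_has_size)
      then obtain As Bs where "\<forall>U\<in>set As. is_atom G U" "sum_list As = A"
         "\<forall>U\<in>set Bs. is_atom G U" "sum_list Bs = B" using less.hyps AB by meson
      then show ?thesis using AB by (intro exI[of _ "As @ Bs"]) auto
    qed
  qed
qed

lemma length_le_size: "\<forall>U\<in>set Us. is_atom G U \<Longrightarrow> length Us \<le> size (sum_list Us)"
  by (induct Us) (auto simp: is_atom_def Suc_le_eq nonempty_has_size)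

lemma lengths_finite: "finite (lengths G S)"
proof -
  have "lengths G S \<subseteq> {..size S}" unfolding lengths_def using length_le_size by auto
  then show ?thesis using finite_subset by blast
qed

lemma atom_one: assumes "is_atom G U" "\<one> \<in># U" shows "U = {#\<one>#}"
proof -
  obtain xs where xs: "mset xs = U" "set xs \<subseteq> carrier G" "list_prod G xs = \<one>"
    using assms(1) unfolding is_atom_def po_iff by blast
  then have "\<one> \<in> set xs" using assms(2) by auto
  then obtain as bs where xsd: "xs = as @ \<one> # bs" by (meson split_list)
  have c: "set as \<subseteq> carrier G" "set bs \<subseteq> carrier G" using xs xsd by auto
  have "list_prod G xs = list_prod G as \<otimes> (\<one> \<otimes> list_prod G bs)"
    unfolding xsd using lp_append[OF c(1), of "\<one> # bs"] c(2) by simp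
  then have "list_prod G (as @ bs) = \<one>" using xs(3) lp_append[OF c] c by simp
  then have "mset (as @ bs) \<in> prod_one_seqs G" unfolding po_iff
    using c by (intro exI[of _ "as @ bs"]) simp
  moreover have "{#\<one>#} \<in> prod_one_seqs G" unfolding po_iff
    by (intro exI[of _ "[\<one>]"]) auto
  moreover have "U = {#\<one>#} + mset (as @ bs)" using xs xsd by auto
  ultimately have "{#\<one>#} = {#} \<or> mset (as @ bs) = {#}"
    using assms(1) unfolding is_atom_def by (elim conjE allE[of _ "{#\<one>#}"] allE[of _ "mset (as @ bs)"]) simp
  then have "mset (as @ bs) = {#}" by simp
  then show ?thesis using \<open>U = {#\<one>#} + mset (as @ bs)\<close> by simp
qed

lemma atom_size: assumes "is_atom G U" "\<one> \<notin># U" shows "2 \<le> size U"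
proof (rule ccontr)
  assume "\<not> 2 \<le> size U"
  moreover have "U \<noteq> {#}" using assms is_atom_def by blast
  ultimately have "size U = 1" by (simp add: nonempty_has_size)
  obtain xs where xs: "mset xs = U" "set xs \<subseteq> carrier G" "list_prod G xs = \<one>"
    using assms(1) unfolding is_atom_def po_iff by blast
  then have "length xs = 1" using \<open>size U = 1\<close> by auto
  then obtain x where "xs = [x]" by (cases xs) auto
  then show False using xs assms(2) by auto
qed

lemma one_atom: "is_atom G {#\<one>#}"
proof -
  have "{#\<one>#} \<in> prod_one_seqs G" unfolding po_iff by (intro exI[of _ "[\<one>]"]) auto
  moreover have "A = {#} \<or> B = {#}" if "{#\<one>#} = A + B" for A B :: "'a multiset"
    using that by (metis union_is_single)
  ultimately show ?thesis unfolding is_atom_def by auto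
qed

lemma rot: assumes "list_prod G xs = \<one>" "set xs \<subseteq> carrier G" "h \<in> set xs"
  shows "\<exists>ys. mset ys = mset xs - {#h#} \<and> set ys \<subseteq> carrier G \<and> list_prod G ys \<otimes> h = \<one>
     \<and> h \<otimes> list_prod G ys = \<one>"
proof -
  obtain as bs where xsd: "xs = as @ h # bs" using assms(3) by (meson split_list)
  have ca: "set as \<subseteq> carrier G" and cb: "set bs \<subseteq> carrier G" and ch: "h \<in> carrier G"
    using assms(2) xsd by auto
  define pa where "pa = list_prod G as"
  define pb where "pb = list_prod G bs"
  have cpa: "pa \<in> carrier G" using ca pa_def by simp
  have cpb: "pb \<in> carrier G" using cb pb_def by simp
  have "list_prod G xs = pa \<otimes> (h \<otimes> pb)"
    unfolding xsd pa_def pb_def using lp_append[OF ca, of "h # bs"] cb ch by simp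
  then have e: "pa \<otimes> (h \<otimes> pb) = \<one>" using assms(1) by simp
  then have e': "(pa \<otimes> h) \<otimes> pb = \<one>" using cpa cpb ch m_assoc by metis
  have 1: "pb \<otimes> (pa \<otimes> h) = \<one>" by (rule inv_comm[OF e']) (use cpa cpb ch in auto)
  have 2: "(h \<otimes> pb) \<otimes> pa = \<one>" by (rule inv_comm[OF e]) (use cpa cpb ch in auto)
  have m: "mset (bs @ as) = mset xs - {#h#}" using xsd by simp
  have s: "set (bs @ as) \<subseteq> carrier G" using ca cb by simp
  have p: "list_prod G (bs @ as) = pb \<otimes> pa" using lp_append[OF cb ca] pa_def pb_def by simp
  have "list_prod G (bs @ as) \<otimes> h = \<one>" unfolding p using 1 cpa cpb ch m_assoc by metis
  moreover have "h \<otimes> list_prod G (bs @ as) = \<one>" unfolding p using 2 cpa cpb ch m_assoc by metis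
  ultimately show ?thesis using m s by blast
qed

lemma split_po: assumes "A \<in> prod_one_seqs G" "h1 \<in> carrier G" "h2 \<in> carrier G"
    "h1 \<otimes> h2 \<in># A"
  shows "A - {#h1 \<otimes> h2#} + {#h1, h2#} \<in> prod_one_seqs G"
proof -
  obtain zs where zs: "mset zs = A" "set zs \<subseteq> carrier G" "list_prod G zs = \<one>"
    using assms(1) unfolding po_iff by blast
  then have "h1 \<otimes> h2 \<in> set zs" using assms(4) by auto
  then obtain cs ds where zsd: "zs = cs @ (h1 \<otimes> h2) # ds" by (meson split_list)
  have cc: "set cs \<subseteq> carrier G" and cd: "set ds \<subseteq> carrier G" using zs zsd by auto
  have "list_prod G (cs @ h1 # h2 # ds) = list_prod G zs"
    unfolding zsd using lp_append[OF cc, of "h1 # h2 # ds"] lp_append[OF cc, of "(h1 \<otimes> h2) # ds"]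
      cd assms(2,3) by (simp add: m_assoc)
  moreover have "mset (cs @ h1 # h2 # ds) = A - {#h1 \<otimes> h2#} + {#h1, h2#}"
    using zs(1) zsd by auto
  ultimately show ?thesis unfolding po_iff using zs cc cd assms(2,3)
    by (intro exI[of _ "cs @ h1 # h2 # ds"]) auto
qed

lemma merge_atom:
  assumes at: "is_atom G (mset (as @ h1 # h2 # bs))" and c: "set (as @ h1 # h2 # bs) \<subseteq> carrier G"
    and p: "list_prod G (as @ h1 # h2 # bs) = \<one>"
  shows "is_atom G (mset (as @ (h1 \<otimes> h2) # bs))"
proof -
  have ca: "set as \<subseteq> carrier G" and cb: "set bs \<subseteq> carrier G" and h: "h1 \<in> carrier G" "h2 \<in> carrier G"
    using c by auto
  define g where "g = h1 \<otimes> h2"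
  have cg: "g \<in> carrier G" using h g_def by simp
  have "list_prod G (as @ g # bs) = list_prod G (as @ h1 # h2 # bs)"
    using lp_append[OF ca, of "h1 # h2 # bs"] lp_append[OF ca, of "g # bs"] cb h g_def
    by (simp add: m_assoc)
  then have po: "mset (as @ g # bs) \<in> prod_one_seqs G" unfolding po_iff using p ca cb cg
    by (intro exI[of _ "as @ g # bs"]) auto
  have V: "mset (as @ h1 # h2 # bs) = mset as + mset bs + {#h1, h2#}" by simp
  have V': "mset (as @ g # bs) = add_mset g (mset as + mset bs)" by simp
  have dec: "A = {#} \<or> B = {#}" if AB: "A \<in> prod_one_seqs G" "B \<in> prod_one_seqs G"
     "mset (as @ g # bs) = A + B" for A B
  proof -
    have "g \<in># A + B" using AB(3) by (metis V' union_single_eq_member)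
    then consider "g \<in># A" | "g \<in># B" by auto
    then show ?thesis
    proof cases
      case 1
      have A': "A - {#g#} + {#h1, h2#} \<in> prod_one_seqs G" using split_po[OF AB(1) h] 1 g_def by simp
      have "mset as + mset bs = A - {#g#} + B" using AB(3) V' 1
        by (metis add_diff_cancel_left' add_mset_add_single diff_union_single_conv union_commute)
      then have "mset (as @ h1 # h2 # bs) = (A - {#g#} + {#h1, h2#}) + B" using V
        by (simp add: ac_simps)
      then have "A - {#g#} + {#h1, h2#} = {#} \<or> B = {#}" using at A' AB(2) unfolding is_atom_def by blast
      then show ?thesis by simp
    next
      case 2
      have B': "B - {#g#} + {#h1, h2#} \<in> prod_one_seqs G" using split_po[OF AB(2) h] 2 g_def by simp
      have "mset as + mset bs = A + (B - {#g#})" using AB(3) V' 2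
        by (metis add_diff_cancel_left' add_mset_add_single diff_union_single_conv union_commute)
      then have "mset (as @ h1 # h2 # bs) = A + (B - {#g#} + {#h1, h2#})" using V
        by (simp add: ac_simps)
      then have "A = {#} \<or> B - {#g#} + {#h1, h2#} = {#}" using at B' AB(1) unfolding is_atom_def by blast
      then show ?thesis by simp
    qed
  qed
  show ?thesis unfolding is_atom_def g_def[symmetric] using po dec by auto
qed

lemma merge_two:
  assumes "U1 \<in> prod_one_seqs G" "U2 \<in> prod_one_seqs G" "h1 \<in># U1" "h2 \<in># U2"
  shows "U1 - {#h1#} + (U2 - {#h2#}) + {#h1 \<otimes> h2#} \<in> prod_one_seqs G"
proof -
  obtain xs where xs: "mset xs = U1" "set xs \<subseteq> carrier G" "list_prod G xs = \<one>"
    using assms(1) unfolding po_iff by blast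
  obtain ys where ys: "mset ys = U2" "set ys \<subseteq> carrier G" "list_prod G ys = \<one>"
    using assms(2) unfolding po_iff by blast
  have h: "h1 \<in> carrier G" "h2 \<in> carrier G" using xs ys assms(3,4) by auto
  obtain xs' where xs': "mset xs' = U1 - {#h1#}" "set xs' \<subseteq> carrier G" "list_prod G xs' \<otimes> h1 = \<one>"
  proof -
    have "h1 \<in> set xs" using xs(1) assms(3) by auto
    then show ?thesis using rot[OF xs(3) xs(2)] xs(1) that by blast
  qed
  obtain ys' where ys': "mset ys' = U2 - {#h2#}" "set ys' \<subseteq> carrier G" "h2 \<otimes> list_prod G ys' = \<one>"
  proof -
    have "h2 \<in> set ys" using ys(1) assms(4) by auto
    then show ?thesis using rot[OF ys(3) ys(2)] ys(1) that by blast
  qed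
  have cx: "list_prod G xs' \<in> carrier G" and cy: "list_prod G ys' \<in> carrier G" using xs' ys' by auto
  have "list_prod G (xs' @ (h1 \<otimes> h2) # ys') = list_prod G xs' \<otimes> ((h1 \<otimes> h2) \<otimes> list_prod G ys')"
    using lp_append[OF xs'(2), of "(h1 \<otimes> h2) # ys'"] ys'(2) h by simp
  also have "\<dots> = (list_prod G xs' \<otimes> h1) \<otimes> (h2 \<otimes> list_prod G ys')"
    using cx cy h by (simp add: m_assoc)
  also have "\<dots> = \<one>" using xs'(3) ys'(3) by simp
  finally show ?thesis unfolding po_iff using xs' ys' h
    by (intro exI[of _ "xs' @ (h1 \<otimes> h2) # ys'"]) auto
qed

lemma P_lemma: assumes P: "property_P G" and h: "h1 \<in> carrier G" "h2 \<in> carrier G"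
  and S: "S = S0 + {#h1, h2#}" and T: "T = S0 + {#h1 \<otimes> h2#}" and m: "m \<in> lengths G T"
  shows "m \<in> lengths G S \<or> Suc m \<in> lengths G S"
proof -
  define g where "g = h1 \<otimes> h2"
  obtain Ws where Ws: "length Ws = m" "\<forall>U\<in>set Ws. is_atom G U" "sum_list Ws = T"
    using m unfolding lengths_def by blast
  have "g \<in># sum_list Ws" using Ws T g_def by simp
  then obtain W where W: "W \<in> set Ws" "g \<in># W" unfolding in_sum_list by blast
  then obtain as bs where Wsd: "Ws = as @ W # bs" by (meson split_list)
  define W0 where "W0 = W - {#g#}"
  have Weq: "W = add_mset g W0" using W(2) W0_def by simp
  have S0eq: "S0 = sum_list as + W0 + sum_list bs"
  proof -
    have "sum_list as + W0 + sum_list bs + {#g#} = S0 + {#g#}"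
      using Ws(3) T Wsd Weq g_def by (simp add: ac_simps)
    then show ?thesis by simp
  qed
  have atW: "is_atom G W" using Ws W by auto
  define V where "V = W - {#g#} + {#h1, h2#}"
  have "is_atom G V \<or> (\<exists>U1 U2. is_atom G U1 \<and> is_atom G U2 \<and> V = U1 + U2)"
    using P atW W(2) h g_def unfolding property_P_def Let_def V_def by blast
  then show ?thesis
  proof
    assume "is_atom G V"
    then have "length (as @ V # bs) = m \<and> (\<forall>U\<in>set (as @ V # bs). is_atom G U) \<and>
        sum_list (as @ V # bs) = S"
      using Ws Wsd S S0eq V_def W0_def by (auto simp: ac_simps)
    then show ?thesis unfolding lengths_def by blast
  next
    assume "\<exists>U1 U2. is_atom G U1 \<and> is_atom G U2 \<and> V = U1 + U2"
    then obtain U1 U2 where U: "is_atom G U1" "is_atom G U2" "V = U1 + U2" by blast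
    then have "length (as @ U1 # U2 # bs) = Suc m \<and> (\<forall>U\<in>set (as @ U1 # U2 # bs). is_atom G U) \<and>
        sum_list (as @ U1 # U2 # bs) = S"
      using Ws Wsd S S0eq V_def W0_def by (auto simp: ac_simps)
    then show ?thesis unfolding lengths_def by blast
  qed
qed

lemma main_case:
  assumes P: "property_P G" and one: "\<one> \<notin># S"
  and Vs: "\<forall>V\<in>set Vs. is_atom G V" "sum_list Vs = S"
  and Us: "\<forall>U\<in>set Us. is_atom G U" "sum_list Us = S"
  and lt: "length Vs + 2 \<le> length Us"
  and gapS: "\<forall>c\<in>lengths G S. \<not>(length Vs < c \<and> c < length Us)"
  shows "\<exists>T \<in> prod_one_seqs G. size T < size S \<and> Delta (lengths G T) \<noteq> {} \<and>
     length Us - length Vs - 1 \<le> Max (Delta (lengths G T))"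
proof -
  define M where "M = mset Us"
  have sumM: "\<Sum>\<^sub># M = S" using Us(2) M_def by (simp add: sum_mset_sum_list)
  have "\<exists>V\<in>set Vs. \<exists>xs as h1 h2 bs. mset xs = V \<and> set xs \<subseteq> carrier G \<and> list_prod G xs = \<one>
     \<and> xs = as @ h1 # h2 # bs \<and> Pp M h1 h2"
  proof (rule ccontr)
    assume neg: "\<not> ?thesis"
    have "\<forall>V\<in>set Vs. \<exists>U\<in># mset Us. \<forall>x\<in>#V. excl (mset Us) U x"
    proof (intro ballI)
      fix V assume V: "V \<in> set Vs"
      have atV: "is_atom G V" using Vs V by auto
      obtain xs where xs: "mset xs = V" "set xs \<subseteq> carrier G" "list_prod G xs = \<one>"
        using atom_po[OF atV] unfolding po_iff by blast
      have "\<one> \<notin># V"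
      proof
        assume "\<one> \<in># V"
        then have "\<one> \<in># sum_list Vs" using V unfolding in_sum_list by blast
        then show False using one Vs(2) by simp
      qed
      then have "2 \<le> size V" using atom_size[OF atV] by blast
      then have l2: "2 \<le> length xs" using xs(1) by auto
      have "\<exists>U\<in>#M. \<forall>x\<in>set xs. excl M U x"
      proof (rule chain[OF l2])
        show "\<forall>as x y bs. xs = as @ x # y # bs \<longrightarrow> \<not> Pp M x y"
        proof (intro allI impI notI)
          fix as x y bs assume a: "xs = as @ x # y # bs" "Pp M x y"
          have "\<exists>V\<in>set Vs. \<exists>xs as h1 h2 bs. mset xs = V \<and> set xs \<subseteq> carrier G \<and> list_prod G xs = \<one>
             \<and> xs = as @ h1 # h2 # bs \<and> Pp M h1 h2"
            apply (rule bexI[OF _ V])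
            apply (rule exI[of _ xs], rule exI[of _ as], rule exI[of _ x], rule exI[of _ y], rule exI[of _ bs])
            using xs a by simp
          from neg this show False by contradiction
        qed
        show "set xs \<subseteq> set_mset (\<Sum>\<^sub># M)"
        proof
          fix x assume "x \<in> set xs"
          then have "x \<in># V" using xs(1) by auto
          then have "x \<in># sum_list Vs" using V unfolding in_sum_list by blast
          then show "x \<in># \<Sum>\<^sub># M" using sumM Vs(2) by simp
        qed
      qed
      then show "\<exists>U\<in># mset Us. \<forall>x\<in>#V. excl (mset Us) U x"
        unfolding M_def xs(1)[symmetric] by simp
    qed
    note ex = this
    have Une: "\<forall>U\<in>set Us. U \<noteq> {#}" using Us atom_ne by blast
    have Vne: "\<forall>V\<in>set Vs. V \<noteq> {#}" using Vs atom_ne by blast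
    have sums: "sum_list Vs = sum_list Us" using Vs Us by simp
    have ltt: "length Vs < length Us" using lt by simp
    show False by (rule comb[OF sums Une ltt ex Vne])
  qed
  then obtain V xs as h1 h2 bs where V: "V \<in> set Vs" and xs: "mset xs = V" "set xs \<subseteq> carrier G"
    "list_prod G xs = \<one>" "xs = as @ h1 # h2 # bs" and pp: "Pp M h1 h2" by blast
  obtain U1 U2 R where UR: "M = {#U1, U2#} + R" "h1 \<in># U1" "h2 \<in># U2" using pp unfolding Pp_def by blast
  have h: "h1 \<in> carrier G" "h2 \<in> carrier G" using xs by auto
  define g where "g = h1 \<otimes> h2"
  have "U1 \<in># M" "U2 \<in># M" using UR(1) by simp_all
  then have "U1 \<in> set Us" "U2 \<in> set Us" using M_def by simp_all
  then have atU1: "is_atom G U1" and atU2: "is_atom G U2" using Us by auto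
  obtain Rs where Rs: "mset Rs = R" using ex_mset by blast
  have atR: "\<forall>U\<in>set Rs. is_atom G U"
  proof
    fix U assume "U \<in> set Rs"
    then have "U \<in># M" using UR(1) Rs by auto
    then show "is_atom G U" using Us M_def by auto
  qed
  have lenR: "length Rs + 2 = length Us"
  proof -
    have "size M = length Us" using M_def by simp
    then show ?thesis using UR(1) Rs by auto
  qed
  obtain vs1 vs2 where Vsd: "Vs = vs1 @ V # vs2" using V split_list by meson
  define V0 where "V0 = mset as + mset bs"
  define S0 where "S0 = sum_list vs1 + V0 + sum_list vs2"
  define T where "T = S0 + {#g#}"
  have SS0: "S = S0 + {#h1, h2#}" using Vs(2) Vsd xs S0_def V0_def by (simp add: ac_simps)
  have atV': "is_atom G (mset (as @ g # bs))" using merge_atom[of as h1 h2 bs] Vs V xs g_def by auto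
  have "length (vs1 @ mset (as @ g # bs) # vs2) = length Vs \<and>
     (\<forall>U\<in>set (vs1 @ mset (as @ g # bs) # vs2). is_atom G U) \<and>
     sum_list (vs1 @ mset (as @ g # bs) # vs2) = T"
    using Vsd Vs(1) atV' T_def S0_def V0_def by (auto simp: ac_simps)
  then have k: "length Vs \<in> lengths G T" and Tpo: "T \<in> prod_one_seqs G"
    using sum_atoms unfolding lengths_def by blast+
  obtain U1' where U1': "U1 = add_mset h1 U1'" using UR(2) multi_member_split by metis
  obtain U2' where U2': "U2 = add_mset h2 U2'" using UR(3) multi_member_split by metis
  define W where "W = U1' + U2' + {#g#}"
  have "W = U1 - {#h1#} + (U2 - {#h2#}) + {#h1 \<otimes> h2#}" using U1' U2' W_def g_def by simp
  then have Wpo: "W \<in> prod_one_seqs G" using merge_two[OF atom_po[OF atU1] atom_po[OF atU2] UR(2,3)] by simp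
  obtain Ws where Ws: "\<forall>U\<in>set Ws. is_atom G U" "sum_list Ws = W" using fact_exists[OF Wpo] by blast
  have Wne: "Ws \<noteq> []" using Ws W_def by auto
  have "S = U1 + U2 + \<Sum>\<^sub># R" using sumM UR(1) by (simp add: ac_simps)
  then have "S0 + {#h1, h2#} = (U1' + U2' + \<Sum>\<^sub># R) + {#h1, h2#}" using SS0 U1' U2' by simp
  then have "S0 = U1' + U2' + \<Sum>\<^sub># R" by (simp only: add_right_cancel)
  then have TW: "T = sum_list (Ws @ Rs)" using T_def W_def Ws(2) Rs by (simp add: sum_mset_sum_list[symmetric] ac_simps)
  have "length (Ws @ Rs) = length (Ws @ Rs) \<and> (\<forall>U\<in>set (Ws @ Rs). is_atom G U) \<and> sum_list (Ws @ Rs) = T"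
    using TW Ws(1) atR by auto
  then have big: "length (Ws @ Rs) \<in> lengths G T" unfolding lengths_def by blast
  have bigl: "length Us - 1 \<le> length (Ws @ Rs)" using Wne lenR by (cases Ws) auto
  have sep: "\<forall>m\<in>lengths G T. m \<le> length Vs \<or> length Us - 1 \<le> m"
  proof
    fix m assume "m \<in> lengths G T"
    then have "m \<in> lengths G S \<or> Suc m \<in> lengths G S"
      using P_lemma[OF P h SS0] T_def g_def by blast
    then show "m \<le> length Vs \<or> length Us - 1 \<le> m" using gapS by force
  qed
  have "Delta (lengths G T) \<noteq> {} \<and> (length Us - 1) - length Vs \<le> Max (Delta (lengths G T))"
    by (rule gap[OF lengths_finite k _ big bigl _ sep]) (use lt in auto)
  moreover have "size T < size S" using SS0 T_def by simp
  ultimately show ?thesis using Tpo by auto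
qed

lemma one_case:
  assumes one: "\<one> \<in># S"
  and Vs: "\<forall>V\<in>set Vs. is_atom G V" "sum_list Vs = S"
  and Us: "\<forall>U\<in>set Us. is_atom G U" "sum_list Us = S"
  and lt: "length Vs + 2 \<le> length Us"
  and gapS: "\<forall>c\<in>lengths G S. \<not>(length Vs < c \<and> c < length Us)"
  shows "\<exists>T \<in> prod_one_seqs G. size T < size S \<and> Delta (lengths G T) \<noteq> {} \<and>
     length Us - length Vs - 1 \<le> Max (Delta (lengths G T))"
proof -
  define T where "T = S - {#\<one>#}"
  have ST: "S = T + {#\<one>#}" using one T_def by simp
  have rem: "\<exists>Xs'. length Xs' + 1 = length Xs \<and> (\<forall>U\<in>set Xs'. is_atom G U) \<and> sum_list Xs' = T"
    if X: "\<forall>U\<in>set Xs. is_atom G U" "sum_list Xs = S" for Xs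
  proof -
    have "\<one> \<in># sum_list Xs" using one X(2) by simp
    then obtain U where U: "U \<in> set Xs" "\<one> \<in># U" unfolding in_sum_list by blast
    have U1: "U = {#\<one>#}" using atom_one X U by auto
    obtain xs1 xs2 where Xd: "Xs = xs1 @ U # xs2" using U split_list by meson
    have "sum_list (xs1 @ xs2) + {#\<one>#} = T + {#\<one>#}" using X(2) ST Xd U1 by (simp add: ac_simps)
    then have "sum_list (xs1 @ xs2) = T" by simp
    then show ?thesis using X Xd by (intro exI[of _ "xs1 @ xs2"]) auto
  qed
  obtain Vs' where Vs': "length Vs' + 1 = length Vs" "\<forall>U\<in>set Vs'. is_atom G U" "sum_list Vs' = T"
    using rem[OF Vs] by blast
  obtain Us' where Us': "length Us' + 1 = length Us" "\<forall>U\<in>set Us'. is_atom G U" "sum_list Us' = T"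
    using rem[OF Us] by blast
  have k: "length Vs - 1 \<in> lengths G T" using Vs' unfolding lengths_def by force
  have big: "length Us - 1 \<in> lengths G T" using Us' unfolding lengths_def by force
  have Tpo: "T \<in> prod_one_seqs G" using sum_atoms Vs' by blast
  have sep: "\<forall>m\<in>lengths G T. m \<le> length Vs - 1 \<or> length Us - 1 \<le> m"
  proof
    fix m assume "m \<in> lengths G T"
    then obtain Ws where Ws: "length Ws = m" "\<forall>U\<in>set Ws. is_atom G U" "sum_list Ws = T"
      unfolding lengths_def by blast
    have "length (Ws @ [{#\<one>#}]) = Suc m \<and> (\<forall>U\<in>set (Ws @ [{#\<one>#}]). is_atom G U)
       \<and> sum_list (Ws @ [{#\<one>#}]) = S" using Ws ST one_atom by auto
    then have "Suc m \<in> lengths G S" unfolding lengths_def by blast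
    then show "m \<le> length Vs - 1 \<or> length Us - 1 \<le> m" using gapS by force
  qed
  have "Delta (lengths G T) \<noteq> {} \<and> (length Us - 1) - (length Vs - 1) \<le> Max (Delta (lengths G T))"
    by (rule gap[OF lengths_finite k _ big _ _ sep]) (use lt Vs'(1) in auto)
  moreover have "size T < size S" using ST by simp
  ultimately show ?thesis using Tpo by (auto intro: bexI[of _ T])
qed

end

theorem lemma5p4:
  fixes G :: "('a, 'b) monoid_scheme"
  assumes "group G"
    and "finite (carrier G)"
    and "card (carrier G) \<ge> 3"
    and "property_P G"
    and "S \<in> prod_one_seqs G"
    and "Delta (lengths G S) \<noteq> {}"
    and "Max (Delta (lengths G S)) \<ge> 2"
  shows "\<exists>T \<in> prod_one_seqs G. size T < size S \<and> Delta (lengths G T) \<noteq> {} \<and>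
           Max (Delta (lengths G T)) \<ge> Max (Delta (lengths G S)) - 1"
proof -
  interpret group G by (rule assms(1))
  define L where "L = lengths G S"
  have fin: "finite (Delta L)" using Delta_finite lengths_finite L_def by auto
  have "Max (Delta L) \<in> Delta L" using Max_in[OF fin] assms(6) L_def by auto
  then obtain a b where ab: "a \<in> L" "b \<in> L" "a < b" "\<forall>c\<in>L. \<not>(a<c \<and> c<b)"
    "Max (Delta L) = b - a" unfolding Delta_def by blast
  obtain Vs where Vs: "length Vs = a" "\<forall>U\<in>set Vs. is_atom G U" "sum_list Vs = S"
    using ab(1) L_def lengths_def by blast
  obtain Us where Us: "length Us = b" "\<forall>U\<in>set Us. is_atom G U" "sum_list Us = S"
    using ab(2) L_def lengths_def by blast
  have lt: "length Vs + 2 \<le> length Us" using assms(7) ab(5) L_def Vs Us by simp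
  have gapS: "\<forall>c\<in>lengths G S. \<not>(length Vs < c \<and> c < length Us)" using ab(4) L_def Vs Us by simp
  have "\<exists>T \<in> prod_one_seqs G. size T < size S \<and> Delta (lengths G T) \<noteq> {} \<and>
     length Us - length Vs - 1 \<le> Max (Delta (lengths G T))"
  proof (cases "\<one>\<^bsub>G\<^esub> \<in># S")
    case True
    show ?thesis by (rule one_case[OF True Vs(2,3) Us(2,3) lt gapS])
  next
    case False
    show ?thesis by (rule main_case[OF assms(4) False Vs(2,3) Us(2,3) lt gapS])
  qed
  then show ?thesis using ab(5) L_def Vs Us by auto
qed

end
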